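(* Let $r$ be a nonnegative integer. For real $x$ with $|x|<1$, $$\sum_{m=0}^\infty\zeta^\star(r+2,\{2\}^m)x^{2m}=\sum_{k=1}^\infty\frac{1}{k^{r+2}}\frac{\Gamma(k+x)\Gamma(k-x)}{\Gamma(k)^2}.$$
   Context: $\zeta^\star(\alpha_1,\ldots,\alpha_r)=\sum_{1\le k_1\le\cdots\le k_r}k_1^{-\alpha_1}\cdots k_r^{-\alpha_r}$ for positive integers $\alpha_i$ with $\alpha_1\ge2$ in the nontrivial-first-entry convention used here (the argument tuple $(r+2,\{2\}^m)$ consists of $r+2$ followed by $m$ copies of $2$; for $m=0$ it is $\zeta(r+2)$). $\Gamma$ is the gamma function. *)

theory Defs
  imports "HOL-Analysis.Analysis"
begin

definition mzs_index :: "nat list \<Rightarrow> nat list set" where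
  "mzs_index as = {ks. length ks = length as \<and> sorted ks \<and> (\<forall>k\<in>set ks. 1 \<le> k)}"

definition zeta_star :: "nat list \<Rightarrow> real" where
  "zeta_star as = (\<Sum>\<^sub>\<infinity>ks\<in>mzs_index as. \<Prod>i<length as. 1 / real (ks ! i) ^ (as ! i))"

end

theory Submission
  imports Defs
begin


definition GG :: "real \<Rightarrow> nat \<Rightarrow> real" where
  "GG x k = Gamma (real k + x) * Gamma (real k - x) / Gamma (real k) ^ 2"

lemma GG_pos: assumes "\<bar>x\<bar> < 1" "k \<ge> 1" shows "GG x k > 0"
proof -
  have "real k + x > 0" "real k - x > 0" "real k > 0" using assms by auto
  thus ?thesis unfolding GG_def by (intro divide_pos_pos mult_pos_pos zero_less_power Gamma_real_pos)
qed

lemma GG_step: assumes "\<bar>x\<bar> < 1" "k \<ge> 1"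
  shows "GG x (Suc k) = GG x k * (1 - x^2 / real k ^ 2)"
proof -
  have p: "real k + x > 0" "real k - x > 0" "real k > 0" using assms by auto
  have n: "real k + x \<notin> \<int>\<^sub>\<le>\<^sub>0" "real k - x \<notin> \<int>\<^sub>\<le>\<^sub>0" "real k \<notin> \<int>\<^sub>\<le>\<^sub>0"
    using p by (auto elim!: nonpos_Ints_cases)
  have e1: "Gamma (real (Suc k) + x) = (real k + x) * Gamma (real k + x)"
    using Gamma_plus1[OF n(1)] by (simp add: add_ac)
  have e2: "Gamma (real (Suc k) - x) = (real k - x) * Gamma (real k - x)"
    using Gamma_plus1[OF n(2)] by (simp add: algebra_simps)
  have e3: "Gamma (real (Suc k)) = real k * Gamma (real k)"
    using Gamma_plus1[OF n(3)] by (simp add: add_ac)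
  have g: "Gamma (real k) > 0" using p by simp
  show ?thesis unfolding GG_def e1 e2 e3 using p g
    by (simp add: field_simps power2_eq_square)
qed

lemma poch_Gamma: assumes "(z::real) > 0" shows "pochhammer z n * Gamma z = Gamma (z + real n)"
proof (induction n)
  case 0 then show ?case by simp
next
  case (Suc n)
  have "z + real n \<notin> \<int>\<^sub>\<le>\<^sub>0" using assms by (auto elim!: nonpos_Ints_cases)
  then have "Gamma (z + real n + 1) = (z + real n) * Gamma (z + real n)" by (rule Gamma_plus1)
  then show ?case using Suc by (simp add: pochhammer_Suc add_ac)
qed

lemma GG_lim: assumes "\<bar>x\<bar> < (1::real)" shows "(\<lambda>n. GG x n) \<longlonglongrightarrow> 1"
proof -
  define C where "C = Gamma (1 + x) * Gamma (1 - x)"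
  have p1: "1 + x > 0" "1 - x > 0" using assms by auto
  have C: "C > 0" unfolding C_def using p1 by simp
  have L: "(\<lambda>n. Gamma_series (1 + x) n * Gamma_series (1 - x) n) \<longlonglongrightarrow> C"
    unfolding C_def by (intro tendsto_intros)
  have L2: "(\<lambda>n. (real n / real (Suc n))^2 * C / (Gamma_series (1 + x) n * Gamma_series (1 - x) n)) \<longlonglongrightarrow> 1 ^ 2 * C / C"
    by (intro tendsto_intros L LIMSEQ_n_over_Suc_n) (use C in auto)
  have eq: "(real n / real (Suc n))^2 * C / (Gamma_series (1 + x) n * Gamma_series (1 - x) n) = GG x (Suc (Suc n))"
    if "n \<ge> 1" for n
  proof -
    have a: "pochhammer (1 + x) (n+1) * Gamma (1 + x) = Gamma (real (Suc (Suc n)) + x)"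
      using poch_Gamma[OF p1(1), of "n+1"] by (simp add: add_ac)
    have b: "pochhammer (1 - x) (n+1) * Gamma (1 - x) = Gamma (real (Suc (Suc n)) - x)"
      using poch_Gamma[OF p1(2), of "n+1"] by (simp add: algebra_simps)
    have c: "Gamma (real (Suc (Suc n))) = fact (Suc n)"
      using Gamma_fact[of "Suc n", where 'a=real] by (simp add: add_ac)
    have g1: "Gamma (1 + x) > 0" "Gamma (1 - x) > 0" using p1 by auto
    have pp: "pochhammer (1 + x) (n+1) > 0" "pochhammer (1 - x) (n+1) > 0"
      using p1 by (auto intro!: pochhammer_pos)
    have e: "exp ((1 + x) * ln (real n)) * exp ((1 - x) * ln (real n)) = real n ^ 2"
    proof -
      have "exp ((1 + x) * ln (real n)) * exp ((1 - x) * ln (real n)) = exp (ln (real n) + ln (real n))"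
        by (simp add: exp_add[symmetric] algebra_simps)
      also have "\<dots> = real n ^ 2" using that by (subst exp_add) (simp add: power2_eq_square)
      finally show ?thesis .
    qed
    have "Gamma_series (1 + x) n * Gamma_series (1 - x) n
        = (fact n * fact n) * (exp ((1 + x) * ln (real n)) * exp ((1 - x) * ln (real n))) / (pochhammer (1 + x) (n+1) * pochhammer (1 - x) (n+1))"
      unfolding Gamma_series_def by (simp add: divide_simps mult_ac del: exp_add)
    also have "\<dots> = (fact n * fact n * real n ^ 2) / (pochhammer (1 + x) (n+1) * pochhammer (1 - x) (n+1))"
      unfolding e ..
    also have "\<dots> = (fact n * fact n * real n ^ 2) * C / (Gamma (real (Suc (Suc n)) + x) * Gamma (real (Suc (Suc n)) - x))"
      unfolding a[symmetric] b[symmetric] C_def using g1 pp by (simp add: field_simps)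
    finally have *: "Gamma_series (1 + x) n * Gamma_series (1 - x) n = \<dots>" .
    have q: "Gamma (real (Suc (Suc n)) + x) > 0" "Gamma (real (Suc (Suc n)) - x) > 0" using assms by auto
    have f: "(fact (Suc n) :: real) = real (Suc n) * fact n" by simp
    have fn: "(fact n :: real) > 0" by simp
    show ?thesis unfolding * GG_def c f using C q that fn
      by (simp add: divide_simps power2_eq_square)
  qed
  have ev: "eventually (\<lambda>n. (real n / real (Suc n))^2 * C / (Gamma_series (1 + x) n * Gamma_series (1 - x) n) = GG x (Suc (Suc n))) sequentially"
    unfolding eventually_at_top_linorder by (rule exI[of _ 1]) (use eq in blast)
  have L3: "(\<lambda>n. (real n / real (Suc n))^2 * C / (Gamma_series (1 + x) n * Gamma_series (1 - x) n)) \<longlonglongrightarrow> 1"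
    using L2 C by simp
  have "(\<lambda>n. GG x (Suc (Suc n))) \<longlonglongrightarrow> 1"
    by (rule Lim_transform_eventually[OF L3 ev])
  then show ?thesis by (rule LIMSEQ_imp_Suc[OF LIMSEQ_imp_Suc])
qed



lemma qb: assumes "\<bar>x\<bar> < 1" "1 \<le> m" shows "0 \<le> x^2/real m^2" "x^2/real m^2 < 1"
proof -
  have a: "x^2 < 1" using assms by (simp add: abs_square_less_1)
  have b: "1 \<le> real m ^ 2" using assms by simp
  show "0 \<le> x^2/real m^2" by simp
  show "x^2/real m^2 < 1" using a b by (simp add: divide_less_eq)
qed

lemma GG_antimono: assumes "\<bar>x\<bar> < 1" "1 \<le> k" "k \<le> m" shows "GG x m \<le> GG x k"
  using assms(3)
proof (induction m rule: dec_induct)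
  case base then show ?case by simp
next
  case (step m)
  have m1: "m \<ge> 1" using assms step by simp
  note q = qb[OF assms(1) m1]
  have "GG x (Suc m) = GG x m * (1 - x^2 / real m ^ 2)" by (rule GG_step[OF assms(1) m1])
  also have "\<dots> \<le> GG x m" using GG_pos[OF assms(1) m1] q by (simp add: mult_left_le)
  finally show ?case using step by simp
qed

lemma GG_ge1: assumes "\<bar>x\<bar> < 1" "1 \<le> k" shows "1 \<le> GG x k"
  by (rule LIMSEQ_le_const2[OF GG_lim[OF assms(1)]]) (use GG_antimono[OF assms] in auto)

lemma prod_GG: assumes "\<bar>x\<bar> < 1" "1 \<le> k" "k \<le> Suc N"
  shows "(\<Prod>j\<in>{k..N}. 1 / (1 - x^2 / real j ^ 2)) = GG x k / GG x (Suc N)"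
  using assms(3)
proof (induction N)
  case 0
  then have "k = 1" using assms by simp
  then show ?case using GG_pos[OF assms(1), of 1] by simp
next
  case (Suc N)
  show ?case
  proof (cases "k = Suc (Suc N)")
    case True
    then show ?thesis using GG_pos[OF assms(1), of k] assms by simp
  next
    case False
    then have kN: "k \<le> Suc N" using Suc by simp
    have q: "x^2 / real (Suc N) ^ 2 < 1" using qb[OF assms(1), of "Suc N"] by simp
    have "{k..Suc N} = insert (Suc N) {k..N}" using kN by auto
    then have "(\<Prod>j\<in>{k..Suc N}. 1 / (1 - x^2 / real j ^ 2)) = 1 / (1 - x^2 / real (Suc N) ^ 2) * (GG x k / GG x (Suc N))"
      using Suc.IH[OF kN] by simp
    also have "\<dots> = GG x k / (GG x (Suc N) * (1 - x^2 / real (Suc N) ^ 2))"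
      using q by simp
    also have "\<dots> = GG x k / GG x (Suc (Suc N))"
      using GG_step[OF assms(1), of "Suc N"] by simp
    finally show ?thesis .
  qed
qed



definition TT :: "nat \<Rightarrow> nat list set" where
  "TT k = {ks. sorted ks \<and> (\<forall>j\<in>set ks. k \<le> j)}"
definition ww :: "real \<Rightarrow> nat list \<Rightarrow> real" where
  "ww y ks = y ^ length ks * prod_list (map (\<lambda>j. 1 / real j ^ 2) ks)"
definition UU :: "nat \<Rightarrow> nat \<Rightarrow> nat \<Rightarrow> nat list set" where
  "UU k N L = {ks \<in> TT k. (\<forall>j\<in>set ks. j \<le> N) \<and> (\<forall>j. count_list ks j < L)}"

lemma sorted_split: "sorted ks \<Longrightarrow> \<forall>j\<in>set ks. k \<le> j \<Longrightarrow>
   ks = replicate (count_list ks k) k @ filter (\<lambda>j. k < j) ks"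
proof (induction ks)
  case Nil then show ?case by simp
next
  case (Cons a ks)
  show ?case
  proof (cases "a = k")
    case True
    then show ?thesis using Cons by auto
  next
    case False
    then have "k < a" using Cons by auto
    then have "\<forall>j\<in>set ks. k < j" using Cons by auto
    then have "filter (\<lambda>j. k < j) ks = ks" "count_list ks k = 0" by (auto simp: count_list_0_iff)
    then show ?thesis using \<open>k < a\<close> by simp
  qed
qed

lemma ww_app: "ww y (replicate i k @ ks) = (y / real k ^ 2) ^ i * ww y ks"
  unfolding ww_def by (simp add: power_add power_divide power_mult_distrib field_simps)

lemma UU_decomp: assumes "k \<le> N"
  shows "UU k N L = (\<lambda>(i,ks). replicate i k @ ks) ` ({..<L} \<times> UU (Suc k) N L)"
proof
  show "UU k N L \<subseteq> (\<lambda>(i,ks). replicate i k @ ks) ` ({..<L} \<times> UU (Suc k) N L)"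
  proof
    fix ks assume ks: "ks \<in> UU k N L"
    then have s: "sorted ks" "\<forall>j\<in>set ks. k \<le> j" "\<forall>j\<in>set ks. j \<le> N" "\<forall>j. count_list ks j < L"
      by (auto simp: UU_def TT_def)
    let ?i = "count_list ks k" and ?r = "filter (\<lambda>j. k < j) ks"
    have e: "ks = replicate ?i k @ ?r" by (rule sorted_split[OF s(1,2)])
    have c: "count_list ?r j < L" for j
    proof -
      have "count_list ks j = count_list (replicate ?i k @ ?r) j" using e by (rule arg_cong)
      then have "count_list ?r j \<le> count_list ks j" by simp
      then show ?thesis using s(4) le_less_trans by blast
    qed
    have sr: "sorted ?r" using s(1) e by (metis sorted_append)
    have "?r \<in> UU (Suc k) N L"
      unfolding UU_def TT_def using s c sr by (auto simp: Suc_le_eq)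
    then show "ks \<in> (\<lambda>(i,ks). replicate i k @ ks) ` ({..<L} \<times> UU (Suc k) N L)"
      using e s(4) by (intro image_eqI[of _ _ "(?i, ?r)"]) auto
  qed
next
  show "(\<lambda>(i,ks). replicate i k @ ks) ` ({..<L} \<times> UU (Suc k) N L) \<subseteq> UU k N L"
  proof (intro subsetI)
    fix z assume "z \<in> (\<lambda>(i,ks). replicate i k @ ks) ` ({..<L} \<times> UU (Suc k) N L)"
    then obtain i ks where z: "z = replicate i k @ ks" and i: "i \<in> {..<L}" and ks: "ks \<in> UU (Suc k) N L"
      by auto
    from ks have s: "sorted ks" "\<forall>j\<in>set ks. Suc k \<le> j" "\<forall>j\<in>set ks. j \<le> N" "\<forall>j. count_list ks j < L"
      by (auto simp: UU_def TT_def)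
    have "count_list ks k = 0" using s(2) by (auto simp: count_list_0_iff)
    moreover have "count_list (replicate i k) j = (if j = k then i else 0)" for j
      by (induction i) auto
    ultimately have "count_list (replicate i k @ ks) j < L" for j using i s(4) by auto
    moreover have "sorted (replicate i k @ ks)" using s(1,2) by (auto simp: sorted_append)
    ultimately show "z \<in> UU k N L"
      unfolding UU_def TT_def z using s assms by auto
  qed
qed

lemma UU_inj: "inj_on (\<lambda>(i,ks). replicate i k @ ks) ({..<L} \<times> UU (Suc k) N L)"
proof (rule inj_onI, clarify)
  fix i ks i' ks' assume a: "ks \<in> UU (Suc k) N L" "ks' \<in> UU (Suc k) N L"
    and e: "replicate i k @ ks = replicate i' k @ ks'"
  have c: "count_list ks k = 0" "count_list ks' k = 0" using a by (auto simp: UU_def TT_def count_list_0_iff)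
  have cr: "count_list (replicate i k) k = i" for i by (induction i) auto
  have "count_list (replicate i k @ ks) k = count_list (replicate i' k @ ks') k" using e by simp
  then have "i = i'" using c cr by simp
  then show "i = i' \<and> ks = ks'" using e by simp
qed

lemma UU_sum: assumes "L \<ge> 1"
  shows "finite (UU k N L) \<and> sum (ww y) (UU k N L) = (\<Prod>j\<in>{k..N}. \<Sum>i<L. (y / real j ^ 2) ^ i)"
proof (induction "Suc N - k" arbitrary: k)
  case 0
  then have "N < k" by simp
  then have "UU k N L = {[]}" using assms
    by (auto simp: UU_def TT_def) (metis list.set_intros(1) neq_Nil_conv le_trans not_le)
  then show ?case using \<open>N < k\<close> by (simp add: ww_def)
next
  case (Suc d)
  show ?case
  proof (cases "k \<le> N")
    case False
    then have "UU k N L = {[]}" using assms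
      by (auto simp: UU_def TT_def) (metis list.set_intros(1) neq_Nil_conv le_trans not_le)
    then show ?thesis using False by (simp add: ww_def)
  next
    case True
    have IH: "finite (UU (Suc k) N L)" "sum (ww y) (UU (Suc k) N L) = (\<Prod>j\<in>{Suc k..N}. \<Sum>i<L. (y / real j ^ 2) ^ i)"
      using Suc.hyps(1)[of "Suc k"] Suc.hyps(2) by auto
    have fin: "finite (UU k N L)" unfolding UU_decomp[OF True] using IH(1) by simp
    have "sum (ww y) (UU k N L) = (\<Sum>(i,ks)\<in>{..<L} \<times> UU (Suc k) N L. ww y (replicate i k @ ks))"
      unfolding UU_decomp[OF True] by (subst sum.reindex[OF UU_inj]) (simp add: case_prod_unfold)
    also have "\<dots> = (\<Sum>(i,ks)\<in>{..<L} \<times> UU (Suc k) N L. (y / real k ^ 2) ^ i * ww y ks)"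
      by (simp add: ww_app case_prod_unfold)
    also have "\<dots> = (\<Sum>i<L. (y / real k ^ 2) ^ i) * sum (ww y) (UU (Suc k) N L)"
      by (simp add: sum_product sum.cartesian_product)
    also have "\<dots> = (\<Prod>j\<in>{k..N}. \<Sum>i<L. (y / real j ^ 2) ^ i)"
    proof -
      have "{k..N} = insert k {Suc k..N}" using True by auto
      then show ?thesis using IH(2) by simp
    qed
    finally show ?thesis using fin by simp
  qed
qed



lemma ww_nonneg: "y \<ge> 0 \<Longrightarrow> ww y ks \<ge> 0"
  unfolding ww_def by (induction ks) (auto simp: mult.assoc intro!: divide_nonneg_nonneg mult_nonneg_nonneg)

lemma geo_le: assumes "0 \<le> q" "q < (1::real)" shows "(\<Sum>i<L. q^i) \<le> 1 / (1 - q)"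
  using assms by (simp add: sum_gp_strict divide_right_mono)

lemma main_has_sum: assumes x: "\<bar>x\<bar> < 1" and k: "1 \<le> k"
  shows "(ww (x^2) has_sum GG x k) (TT k)"
proof -
  define y where "y = x^2"
  have y0: "y \<ge> 0" unfolding y_def by simp
  have nn: "\<And>ks. ww y ks \<ge> 0" using ww_nonneg[OF y0] .
  have qj: "0 \<le> y / real j ^ 2" "y / real j ^ 2 < 1" if "j \<ge> 1" for j
    using qb[OF x that] unfolding y_def by auto
  have prod_le: "(\<Prod>j\<in>{k..N}. \<Sum>i<L. (y / real j ^ 2) ^ i) \<le> GG x k / GG x (Suc N)" if "k \<le> N" for N L
  proof -
    have "(\<Prod>j\<in>{k..N}. \<Sum>i<L. (y / real j ^ 2) ^ i) \<le> (\<Prod>j\<in>{k..N}. 1 / (1 - y / real j ^ 2))"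
      using k qj by (intro prod_mono conjI sum_nonneg zero_le_power geo_le) auto
    also have "\<dots> = GG x k / GG x (Suc N)" unfolding y_def using prod_GG[OF x k] that by simp
    finally show ?thesis .
  qed
  have bound: "sum (ww y) F \<le> GG x k" if F: "finite F" "F \<subseteq> TT k" for F
  proof -
    define N where "N = k + (\<Sum>ks\<in>F. sum_list ks)"
    define L where "L = Suc (\<Sum>ks\<in>F. length ks)"
    have sub: "F \<subseteq> UU k N L"
    proof
      fix ks assume ks: "ks \<in> F"
      have "j \<le> N" if "j \<in> set ks" for j
      proof -
        have "j \<le> sum_list ks" using that by (simp add: member_le_sum_list)
        also have "\<dots> \<le> (\<Sum>ks\<in>F. sum_list ks)" using F(1) ks by (intro member_le_sum) auto
        finally show ?thesis unfolding N_def by simp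
      qed
      moreover have "count_list ks j < L" for j
      proof -
        have "count_list ks j \<le> length ks" by (rule count_le_length)
        also have "\<dots> \<le> (\<Sum>ks\<in>F. length ks)" using F(1) ks by (intro member_le_sum) auto
        finally show ?thesis unfolding L_def by simp
      qed
      ultimately show "ks \<in> UU k N L" using ks F(2) unfolding UU_def by auto
    qed
    have L1: "L \<ge> 1" unfolding L_def by simp
    have kN: "k \<le> N" unfolding N_def by simp
    note U = UU_sum[OF L1, of k N y]
    have "sum (ww y) F \<le> sum (ww y) (UU k N L)"
      using U sub nn by (intro sum_mono2) auto
    also have "\<dots> \<le> GG x k / GG x (Suc N)" using U prod_le[OF kN] by simp
    also have "\<dots> \<le> GG x k"
      using GG_ge1[OF x, of "Suc N"] GG_pos[OF x k] by (simp add: divide_le_eq)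
    finally show ?thesis .
  qed
  have summ: "ww y summable_on TT k"
    using nn bound by (intro nonneg_bdd_above_summable_on bdd_aboveI2[where M="GG x k"]) auto
  have up: "infsum (ww y) (TT k) \<le> GG x k"
    using summ bound by (rule infsum_le_finite_sums)
  have low1: "GG x k / GG x (Suc N) \<le> infsum (ww y) (TT k)" if kN: "k \<le> N" for N
  proof -
    have lim: "(\<lambda>L. \<Prod>j\<in>{k..N}. \<Sum>i<L. (y / real j ^ 2) ^ i) \<longlonglongrightarrow> (\<Prod>j\<in>{k..N}. 1 / (1 - y / real j ^ 2))"
    proof (intro tendsto_prod)
      fix j assume "j \<in> {k..N}"
      then have "j \<ge> 1" using k by simp
      then have a1: "0 \<le> y / real j ^ 2" and a2: "y / real j ^ 2 < 1" by (rule qj(1), rule qj(2))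
      have ab: "norm (y / real j ^ 2) < 1" unfolding real_norm_def abs_of_nonneg[OF a1] by (rule a2)
      show "(\<lambda>L. \<Sum>i<L. (y / real j ^ 2) ^ i) \<longlonglongrightarrow> 1 / (1 - y / real j ^ 2)"
        using geometric_sums[OF ab] unfolding sums_def .
    qed
    have "(\<Prod>j\<in>{k..N}. 1 / (1 - y / real j ^ 2)) \<le> infsum (ww y) (TT k)"
    proof (rule LIMSEQ_le_const2[OF lim], intro exI[of _ 1] allI impI)
      fix L :: nat assume L1: "L \<ge> 1"
      note U = UU_sum[OF L1, of k N y]
      have "(\<Prod>j\<in>{k..N}. \<Sum>i<L. (y / real j ^ 2) ^ i) = sum (ww y) (UU k N L)" using U by simp
      also have "\<dots> \<le> infsum (ww y) (TT k)"
        using U nn summ by (intro finite_sum_le_infsum) (auto simp: UU_def)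
      finally show "(\<Prod>j\<in>{k..N}. \<Sum>i<L. (y / real j ^ 2) ^ i) \<le> infsum (ww y) (TT k)" .
    qed
    then show ?thesis unfolding y_def using prod_GG[OF x k] kN by simp
  qed
  have limN: "(\<lambda>N. GG x k / GG x (Suc N)) \<longlonglongrightarrow> GG x k / 1"
    by (rule tendsto_divide[OF tendsto_const LIMSEQ_Suc[OF GG_lim[OF x]]]) simp
  have "GG x k / 1 \<le> infsum (ww y) (TT k)"
    by (rule LIMSEQ_le_const2[OF limN]) (use low1 in auto)
  with up have "infsum (ww y) (TT k) = GG x k" by simp
  then show ?thesis using has_sum_infsum[OF summ] unfolding y_def by simp
qed


lemma prod_list_nth: "prod_list (map f ks) = (\<Prod>i<length ks. (f (ks ! i) :: real))"
  by (induction ks) (simp_all add: prod.lessThan_Suc_shift del: prod.lessThan_Suc)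

lemma zs_term: assumes "length ks = m"
  shows "(\<Prod>i<length (n # replicate m 2). 1 / real ((j # ks) ! i) ^ ((n # replicate m 2) ! i))
       = 1 / real j ^ n * prod_list (map (\<lambda>j. 1 / real j ^ 2) ks)"
  using assms by (simp add: prod.lessThan_Suc_shift prod_list_nth del: prod.lessThan_Suc)

theorem proposition3p1:
  fixes r :: nat and x :: real
  assumes "\<bar>x\<bar> < 1"
  shows "summable (\<lambda>k. 1 / real (Suc k) ^ (r + 2) *
            (Gamma (real (Suc k) + x) * Gamma (real (Suc k) - x) / Gamma (real (Suc k)) ^ 2))
       \<and> (\<lambda>m. zeta_star ((r + 2) # replicate m 2) * x ^ (2 * m)) sums
           (\<Sum>k. 1 / real (Suc k) ^ (r + 2) *
            (Gamma (real (Suc k) + x) * Gamma (real (Suc k) - x) / Gamma (real (Suc k)) ^ 2))"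
proof -
  note x = assms
  define n where "n = r + 2"
  define y where "y = x^2"
  define f where "f k = 1 / real (Suc k) ^ n * GG x (Suc k)" for k
  have feq: "(\<lambda>k. 1 / real (Suc k) ^ (r + 2) *
            (Gamma (real (Suc k) + x) * Gamma (real (Suc k) - x) / Gamma (real (Suc k)) ^ 2)) = f"
    unfolding f_def n_def GG_def by simp
  have fnn: "f k \<ge> 0" for k unfolding f_def using GG_pos[OF x, of "Suc k"] by simp
  have summf: "summable f"
  proof (rule summable_comparison_test)
    show "summable (\<lambda>k. GG x 1 * inverse (real (Suc k) ^ 2))"
      by (intro summable_mult) (subst summable_Suc_iff, rule inverse_power_summable, simp)
    show "\<exists>N. \<forall>k\<ge>N. norm (f k) \<le> GG x 1 * inverse (real (Suc k) ^ 2)"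
    proof (intro exI allI impI)
      fix k :: nat
      have a: "GG x (Suc k) \<le> GG x 1" using GG_antimono[OF x, of 1 "Suc k"] by simp
      have b: "1 / real (Suc k) ^ n \<le> inverse (real (Suc k) ^ 2)"
        unfolding n_def inverse_eq_divide by (intro divide_left_mono power_increasing) auto
      have "f k \<le> inverse (real (Suc k) ^ 2) * GG x 1"
        unfolding f_def using a b GG_pos[OF x, of "Suc k"] by (intro mult_mono) auto
      then show "norm (f k) \<le> GG x 1 * inverse (real (Suc k) ^ 2)" using fnn[of k] by (simp add: mult.commute)
    qed
  qed
  define S where "S = suminf f"
  have hs0: "(f has_sum S) UNIV" unfolding S_def
    using summf fnn by (intro sums_nonneg_imp_has_sum) (auto simp: summable_sums)
  have hs1: "((\<lambda>j. 1 / real j ^ n * GG x j) has_sum S) {1..}"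
  proof -
    have bij: "bij_betw Suc UNIV {1::nat..}"
      by (rule bij_betwI[where g="\<lambda>j. j - 1"]) auto
    show ?thesis using hs0 unfolding has_sum_reindex_bij_betw[OF bij, symmetric] f_def .
  qed
  define f2 where "f2 p = 1 / real (fst p) ^ n * ww y (snd p)" for p :: "nat \<times> nat list"
  define B where "B = Sigma {1::nat..} TT"
  have inner: "((\<lambda>ks. f2 (j, ks)) has_sum 1 / real j ^ n * GG x j) (TT j)" if "j \<in> {1..}" for j
  proof -
    have "j \<ge> 1" using that by simp
    from has_sum_cmult_right[OF main_has_sum[OF x this], of "1 / real j ^ n"]
    show ?thesis unfolding f2_def y_def by simp
  qed
  have f2nn: "f2 p \<ge> 0" for p unfolding f2_def using ww_nonneg[of y] by (simp add: y_def)
  have summB: "f2 summable_on B" unfolding B_def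
    by (rule summable_on_SigmaI[OF inner]) (use has_sum_imp_summable[OF hs1] f2nn in auto)
  have hsB: "(f2 has_sum S) B" unfolding B_def
    by (rule has_sum_SigmaI[OF inner hs1 summB[unfolded B_def]])
  define Bm where "Bm m = Sigma {1::nat..} (\<lambda>j. {ks\<in>TT j. length ks = m})" for m
  have bij2: "bij_betw (\<lambda>p. (length (snd p), p)) B (Sigma UNIV Bm)"
    unfolding B_def Bm_def by (rule bij_betwI[where g=snd]) auto
  have hs2: "((\<lambda>q. f2 (snd q)) has_sum S) (Sigma UNIV Bm)"
    using hsB unfolding has_sum_reindex_bij_betw[OF bij2, symmetric] by simp
  have innerm: "((\<lambda>p. f2 (snd (m, p))) has_sum (zeta_star (n # replicate m 2) * y ^ m)) (Bm m)" for m
  proof -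
    have sub: "Bm m \<subseteq> B" unfolding Bm_def B_def by auto
    have sm: "f2 summable_on Bm m" by (rule summable_on_subset_banach[OF summB sub])
    have bij3: "bij_betw (\<lambda>p. fst p # snd p) (Bm m) (mzs_index (n # replicate m 2))"
    proof (rule bij_betwI[where g="\<lambda>ks. (hd ks, tl ks)"])
      show "(\<lambda>p. fst p # snd p) \<in> Bm m \<rightarrow> mzs_index (n # replicate m 2)"
        unfolding Bm_def mzs_index_def TT_def by (auto intro: le_trans)
      show "(\<lambda>ks. (hd ks, tl ks)) \<in> mzs_index (n # replicate m 2) \<rightarrow> Bm m"
      proof
        fix ks assume "ks \<in> mzs_index (n # replicate m 2)"
        then obtain j rs where ks: "ks = j # rs" and "length rs = m" "sorted (j # rs)" "\<forall>k\<in>set (j#rs). 1 \<le> k"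
          unfolding mzs_index_def by (cases ks) auto
        then show "(hd ks, tl ks) \<in> Bm m" unfolding Bm_def TT_def by auto
      qed
    qed (auto simp: mzs_index_def intro!: hd_Cons_tl)
    have "infsum f2 (Bm m) = infsum (\<lambda>p. y ^ m * (\<Prod>i<length (n # replicate m 2). 1 / real ((fst p # snd p) ! i) ^ ((n # replicate m 2) ! i))) (Bm m)"
    proof (rule infsum_cong)
      fix p assume "p \<in> Bm m"
      then have len: "length (snd p) = m" unfolding Bm_def by auto
      show "f2 p = y ^ m * (\<Prod>i<length (n # replicate m 2). 1 / real ((fst p # snd p) ! i) ^ ((n # replicate m 2) ! i))"
        unfolding zs_term[OF len] f2_def ww_def len by simp
    qed
    also have "\<dots> = y ^ m * infsum (\<lambda>p. (\<Prod>i<length (n # replicate m 2). 1 / real ((fst p # snd p) ! i) ^ ((n # replicate m 2) ! i))) (Bm m)"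
      by (rule infsum_cmult_right')
    also have "\<dots> = y ^ m * zeta_star (n # replicate m 2)"
      unfolding zeta_star_def by (subst infsum_reindex_bij_betw[OF bij3]) (rule refl)
    finally have "infsum f2 (Bm m) = zeta_star (n # replicate m 2) * y ^ m" by simp
    then show ?thesis using has_sum_infsum[OF sm] by simp
  qed
  have "((\<lambda>m. zeta_star (n # replicate m 2) * y ^ m) has_sum S) UNIV"
    by (rule has_sum_Sigma'[OF hs2 innerm])
  then have "(\<lambda>m. zeta_star (n # replicate m 2) * y ^ m) sums S" by (rule has_sum_imp_sums)
  moreover have "y ^ m = x ^ (2 * m)" for m unfolding y_def by (simp add: power_mult)
  ultimately show ?thesis unfolding feq S_def n_def using summf by simp
qed

end
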